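(* Let $S$ be an entropy function for a finite set $X$, let $X'\subset X$, and let $R$ be a new element not in $X$, with $Y:=X'\cup\{R\}$. Define $T$ on $2^Y$ by $T(A):=S(A)$ and $T(A\cup\{R\}):=S(A\cup(X\setminus X'))$ for all $A\subseteq X'$. Then $T$ is an entropy function for $Y$. Moreover, for any EDF $f$ for $S$, the function $g:Y\to\mathbb R$ given by $g(x)=f(x)$ for $x\in X'$ and $g(R)=\sum_{x\in X\setminus X'}f(x)$ is an EDF for $T$.
   Context: An entropy function for a finite set $X$ is a function $S:2^X\to[0,\infty)$ with $S(\emptyset)=0$, $S(A)+S(B)\ge S(A\cap B)+S(A\cup B)$ and $S(A)+S(B)\ge S(A\setminus B)+S(B\setminus A)$ for all $A,B\subseteq X$. An entanglement distribution function (EDF) for $S$ is a function $f:X\to\mathbb R$ with $\big|\sum_{x\in A}f(x)\big|\le S(A)$ for all $A\subseteq X$. *)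

theory Defs
  imports Complex_Main
begin

text \<open>Entropy function for a finite set X: a function on subsets of X (values outside
  Pow X are irrelevant) with S {} = 0, nonnegative, submodular and weakly monotone.\<close>
definition entropy_function :: "'a set \<Rightarrow> ('a set \<Rightarrow> real) \<Rightarrow> bool" where
  "entropy_function X S \<longleftrightarrow> finite X \<and> S {} = 0 \<and>
     (\<forall>A. A \<subseteq> X \<longrightarrow> S A \<ge> 0) \<and>
     (\<forall>A B. A \<subseteq> X \<longrightarrow> B \<subseteq> X \<longrightarrow> S A + S B \<ge> S (A \<inter> B) + S (A \<union> B)) \<and>
     (\<forall>A B. A \<subseteq> X \<longrightarrow> B \<subseteq> X \<longrightarrow> S A + S B \<ge> S (A - B) + S (B - A))"

definition EDF :: "'a set \<Rightarrow> ('a set \<Rightarrow> real) \<Rightarrow> ('a \<Rightarrow> real) \<Rightarrow> bool" where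
  "EDF X S f \<longleftrightarrow> (\<forall>A. A \<subseteq> X \<longrightarrow> \<bar>\<Sum>x\<in>A. f x\<bar> \<le> S A)"

end

theory Submission
  imports Defs
begin

theorem proposition23:
  fixes X X' :: "'a set" and S :: "'a set \<Rightarrow> real" and R :: 'a
    and T :: "'a set \<Rightarrow> real" and Y :: "'a set"
  assumes S: "entropy_function X S"
    and sub: "X' \<subseteq> X"
    and R: "R \<notin> X"
    and Y: "Y = insert R X'"
    and T1: "\<And>A. A \<subseteq> X' \<Longrightarrow> T A = S A"
    and T2: "\<And>A. A \<subseteq> X' \<Longrightarrow> T (insert R A) = S (A \<union> (X - X'))"
  shows "entropy_function Y T \<and>
         (\<forall>f. EDF X S f \<longrightarrow>
              EDF Y T (\<lambda>x. if x = R then (\<Sum>z\<in>X - X'. f z) else f x))"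
proof -
  define D where "D = X - X'"
  define phi where "phi A = (A - {R}) \<union> (if R \<in> A then D else {})" for A
  have finX: "finite X" and S0: "S {} = 0" and Spos: "\<And>A. A \<subseteq> X \<Longrightarrow> S A \<ge> 0"
    and Ssub: "\<And>A B. A \<subseteq> X \<Longrightarrow> B \<subseteq> X \<Longrightarrow> S A + S B \<ge> S (A \<inter> B) + S (A \<union> B)"
    and Sdif: "\<And>A B. A \<subseteq> X \<Longrightarrow> B \<subseteq> X \<Longrightarrow> S A + S B \<ge> S (A - B) + S (B - A)"
    using S unfolding entropy_function_def by auto
  have TS: "T A = S (phi A)" if "A \<subseteq> Y" for A
  proof (cases "R \<in> A")
    case True
    then have "A = insert R (A - {R})" by auto
    moreover have "A - {R} \<subseteq> X'" using that Y by auto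
    ultimately have "T A = S ((A - {R}) \<union> D)" using T2 D_def by metis
    then show ?thesis using True phi_def by simp
  next
    case False
    then have "A \<subseteq> X'" using that Y by auto
    then show ?thesis using T1 False phi_def by simp
  qed
  have phiX: "phi A \<subseteq> X" if "A \<subseteq> Y" for A
    using that Y sub D_def phi_def by auto
  have phiI: "phi (A \<inter> B) = phi A \<inter> phi B" if "A \<subseteq> Y" "B \<subseteq> Y" for A B
    using that Y D_def phi_def by auto
  have phiU: "phi (A \<union> B) = phi A \<union> phi B" for A B
    using D_def phi_def by auto
  have phiD: "phi (A - B) = phi A - phi B" if "A \<subseteq> Y" "B \<subseteq> Y" for A B
    using that Y D_def phi_def by auto
  have "entropy_function Y T"
    unfolding entropy_function_def
  proof (intro conjI allI impI)
    show "finite Y" using Y finX sub finite_subset by auto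
    show "T {} = 0" using T1[of "{}"] S0 by simp
    show "T A \<ge> 0" if "A \<subseteq> Y" for A using TS[OF that] Spos[OF phiX[OF that]] by simp
    show "T A + T B \<ge> T (A \<inter> B) + T (A \<union> B)" if "A \<subseteq> Y" "B \<subseteq> Y" for A B
    proof -
      have a: "A \<inter> B \<subseteq> Y" "A \<union> B \<subseteq> Y" using that by auto
      have e1: "T (A \<inter> B) = S (phi A \<inter> phi B)" using TS[OF a(1)] phiI[OF that] by simp
      have e2: "T (A \<union> B) = S (phi A \<union> phi B)" using TS[OF a(2)] phiU[of A B] by simp
      show ?thesis
        using TS[OF that(1)] TS[OF that(2)] e1 e2
          Ssub[OF phiX[OF that(1)] phiX[OF that(2)]] by linarith
    qed
    show "T A + T B \<ge> T (A - B) + T (B - A)" if "A \<subseteq> Y" "B \<subseteq> Y" for A B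
    proof -
      have a: "A - B \<subseteq> Y" "B - A \<subseteq> Y" using that by auto
      have e1: "T (A - B) = S (phi A - phi B)" using TS[OF a(1)] phiD[OF that] by simp
      have e2: "T (B - A) = S (phi B - phi A)" using TS[OF a(2)] phiD[OF that(2,1)] by simp
      show ?thesis
        using TS[OF that(1)] TS[OF that(2)] e1 e2
          Sdif[OF phiX[OF that(1)] phiX[OF that(2)]] by linarith
    qed
  qed
  moreover have "EDF Y T (\<lambda>x. if x = R then (\<Sum>z\<in>X - X'. f z) else f x)"
    if f: "EDF X S f" for f
    unfolding EDF_def
  proof (intro allI impI)
    fix A assume A: "A \<subseteq> Y"
    define g where "g = (\<lambda>x. if x = R then (\<Sum>z\<in>X - X'. f z) else f x)"
    have finY: "finite Y" using Y finX sub finite_subset by auto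
    have finA0: "finite A" using A finY finite_subset by blast
    have finA: "finite (A - {R})" using finA0 by blast
    have finD: "finite D" using finX D_def by simp
    have disj: "(A - {R}) \<inter> D = {}" using A Y D_def by auto
    have eq1: "sum g (A - {R}) = sum f (A - {R})"
      by (rule sum.cong) (auto simp: g_def)
    have "sum g A = sum f (phi A)"
    proof (cases "R \<in> A")
      case True
      have "sum g A = g R + sum g (A - {R})"
        by (rule sum.remove[OF finA0 True])
      also have "\<dots> = sum f D + sum f (A - {R})" using eq1 by (simp add: g_def D_def)
      also have "\<dots> = sum f ((A - {R}) \<union> D)"
        using sum.union_disjoint[OF finA finD disj, of f] by simp
      also have "(A - {R}) \<union> D = phi A" using True by (simp add: phi_def)
      finally show ?thesis .
    next
      case False
      then have "A - {R} = A" by simp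
      moreover have "phi A = A" using False by (simp add: phi_def)
      ultimately show ?thesis using eq1 by simp
    qed
    moreover have "\<bar>sum f (phi A)\<bar> \<le> S (phi A)"
      using f phiX[OF A] unfolding EDF_def by blast
    ultimately show "\<bar>\<Sum>x\<in>A. (if x = R then (\<Sum>z\<in>X - X'. f z) else f x)\<bar> \<le> T A"
      using TS[OF A] unfolding g_def by simp
  qed
  ultimately show ?thesis by blast
qed

end
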